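(* Let $f$ be a homogeneous polynomial of degree $d\ge 2$ on $\mathbb{C}^2$. Then the holomorphic Hessian metric $-\frac{1}{d(d-1)}\partial^2 f/\partial x_i\partial x_j$ is flat on the open set where the Hessian determinant $\det(\partial^2 f/\partial x_i\partial x_j)$ is nonzero.
   Context: Over $\mathbb{C}$, a (holomorphic) metric means a nondegenerate symmetric complex-bilinear form on the holomorphic tangent bundle; its Levi-Civita connection, curvature tensor and sectional curvatures are defined by the same algebraic formulas as for real pseudo-Riemannian metrics, and flat means the curvature tensor vanishes. *)

theory Defs
  imports "HOL-Analysis.Analysis"
begin

definition pd :: "nat \<Rightarrow> (complex \<times> complex \<Rightarrow> complex) \<Rightarrow> complex \<times> complex \<Rightarrow> complex" where
  "pd i F p = (if i = 0 then deriv (\<lambda>t. F (t, snd p)) (fst p)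
               else deriv (\<lambda>t. F (fst p, t)) (snd p))"

definition hom_poly :: "nat \<Rightarrow> (nat \<Rightarrow> complex) \<Rightarrow> complex \<times> complex \<Rightarrow> complex" where
  "hom_poly d a p = (\<Sum>k\<le>d. a k * fst p ^ k * snd p ^ (d - k))"

definition mdet :: "(nat \<Rightarrow> nat \<Rightarrow> complex \<times> complex \<Rightarrow> complex) \<Rightarrow> complex \<times> complex \<Rightarrow> complex" where
  "mdet g p = g 0 0 p * g 1 1 p - g 0 1 p * g 1 0 p"

definition ginv :: "(nat \<Rightarrow> nat \<Rightarrow> complex \<times> complex \<Rightarrow> complex) \<Rightarrow> nat \<Rightarrow> nat \<Rightarrow> complex \<times> complex \<Rightarrow> complex" where
  "ginv g i j p =
     (if i = 0 \<and> j = 0 then g 1 1 p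
      else if i = 1 \<and> j = 1 then g 0 0 p
      else - g i j p) / mdet g p"

definition christoffel :: "(nat \<Rightarrow> nat \<Rightarrow> complex \<times> complex \<Rightarrow> complex) \<Rightarrow> nat \<Rightarrow> nat \<Rightarrow> nat \<Rightarrow> complex \<times> complex \<Rightarrow> complex" where
  "christoffel g k i j p =
     (\<Sum>l<2. ginv g k l p * (pd i (g j l) p + pd j (g i l) p - pd l (g i j) p)) / 2"

definition riemann :: "(nat \<Rightarrow> nat \<Rightarrow> complex \<times> complex \<Rightarrow> complex) \<Rightarrow> nat \<Rightarrow> nat \<Rightarrow> nat \<Rightarrow> nat \<Rightarrow> complex \<times> complex \<Rightarrow> complex" where
  "riemann g l i j k p =
     pd i (christoffel g l j k) p - pd j (christoffel g l i k) p
     + (\<Sum>m<2. christoffel g l i m p * christoffel g m j k p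
              - christoffel g l j m p * christoffel g m i k p)"

definition flat_on :: "(nat \<Rightarrow> nat \<Rightarrow> complex \<times> complex \<Rightarrow> complex) \<Rightarrow> (complex \<times> complex) set \<Rightarrow> bool" where
  "flat_on g U \<longleftrightarrow> (\<forall>p\<in>U. \<forall>l<2. \<forall>i<2. \<forall>j<2. \<forall>k<2. riemann g l i j k p = 0)"

end

theory Submission
  imports Defs
begin


fun ffa :: "nat \<Rightarrow> nat \<Rightarrow> nat" where
  "ffa k 0 = 1" | "ffa k (Suc m) = ffa k m * (k - m)"

lemma ffa_zero: "k < m \<Longrightarrow> ffa k m = 0"
proof (induction m)
  case (Suc m) then show ?case by (cases "k < m") (auto)
qed simp

definition P :: "nat \<Rightarrow> (nat \<Rightarrow> complex) \<Rightarrow> nat \<Rightarrow> nat \<Rightarrow> complex \<times> complex \<Rightarrow> complex" where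
  "P d a m n q = (\<Sum>k\<le>d. a k * of_nat (ffa k m) * of_nat (ffa (d-k) n) * fst q ^ (k-m) * snd q ^ (d-k-n))"

lemma term_deriv:
  "((\<lambda>t::complex. t ^ (k - m)) has_field_derivative of_nat (k - m) * t ^ (k - Suc m)) (at t)"
proof -
  have "((\<lambda>t::complex. t ^ (k - m)) has_field_derivative of_nat (k - m) * t ^ (k - m - 1)) (at t)"
    by (auto intro!: derivative_eq_intros)
  moreover have "k - m - 1 = k - Suc m" by simp
  ultimately show ?thesis by simp
qed

lemma P_deriv0: "((\<lambda>t. P d a m n (t, y)) has_field_derivative P d a (Suc m) n (t, y)) (at t)"
  unfolding P_def
proof (rule DERIV_sum)
  fix k assume "k \<in> {..d}"
  have "((\<lambda>t. a k * of_nat (ffa k m) * of_nat (ffa (d-k) n) * t ^ (k-m) * y ^ (d-k-n)) has_field_derivative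
     a k * of_nat (ffa k m) * of_nat (ffa (d-k) n) * (of_nat (k - m) * t ^ (k - Suc m)) * y ^ (d-k-n)) (at t)"
    by (intro DERIV_cmult DERIV_cmult_right term_deriv)
  then show "((\<lambda>t. a k * of_nat (ffa k m) * of_nat (ffa (d-k) n) * fst (t, y) ^ (k-m) * snd (t, y) ^ (d-k-n)) has_field_derivative
     a k * of_nat (ffa k (Suc m)) * of_nat (ffa (d-k) n) * fst (t, y) ^ (k - Suc m) * snd (t, y) ^ (d-k-n)) (at t)"
    by (simp only: ffa.simps of_nat_mult fst_conv snd_conv ac_simps)
qed

lemma P_deriv1: "((\<lambda>t. P d a m n (x, t)) has_field_derivative P d a m (Suc n) (x, t)) (at t)"
  unfolding P_def
proof (rule DERIV_sum)
  fix k assume "k \<in> {..d}"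
  have "((\<lambda>t. a k * of_nat (ffa k m) * of_nat (ffa (d-k) n) * x ^ (k-m) * t ^ (d-k-n)) has_field_derivative
     a k * of_nat (ffa k m) * of_nat (ffa (d-k) n) * x ^ (k-m) * (of_nat (d-k - n) * t ^ (d-k - Suc n))) (at t)"
    by (intro DERIV_cmult DERIV_cmult_right term_deriv)
  then show "((\<lambda>t. a k * of_nat (ffa k m) * of_nat (ffa (d-k) n) * fst (x, t) ^ (k-m) * snd (x, t) ^ (d-k-n)) has_field_derivative
     a k * of_nat (ffa k m) * of_nat (ffa (d-k) (Suc n)) * fst (x, t) ^ (k - m) * snd (x, t) ^ (d-k - Suc n)) (at t)"
    by (simp only: ffa.simps of_nat_mult fst_conv snd_conv ac_simps)
qed

lemma P_vanish: "m + n > d \<Longrightarrow> P d a m n q = 0"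
  unfolding P_def
proof (rule sum.neutral, intro ballI)
  fix k assume "m + n > d" "k \<in> {..d}"
  then have "k < m \<or> d - k < n" by auto
  then show "a k * of_nat (ffa k m) * of_nat (ffa (d-k) n) * fst q ^ (k-m) * snd q ^ (d-k-n) = 0"
    by (auto simp: ffa_zero)
qed

lemma P_euler: "fst q * P d a (Suc m) n q + snd q * P d a m (Suc n) q
   = (of_nat d - of_nat m - of_nat n) * P d a m n q"
proof -
  obtain x y where q: "q = (x, y)" by (cases q)
  have "x * (a k * of_nat (ffa k (Suc m)) * of_nat (ffa (d-k) n) * x ^ (k - Suc m) * y ^ (d-k-n))
      + y * (a k * of_nat (ffa k m) * of_nat (ffa (d-k) (Suc n)) * x ^ (k - m) * y ^ (d-k - Suc n))
      = (of_nat d - of_nat m - of_nat n) * (a k * of_nat (ffa k m) * of_nat (ffa (d-k) n) * x ^ (k-m) * y ^ (d-k-n))"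
    if "k \<le> d" for k
  proof (cases "m \<le> k \<and> n \<le> d - k")
    case True
    have e1: "x * (of_nat (k - m) * x ^ (k - Suc m)) = of_nat (k - m) * x ^ (k - m)"
    proof (cases "k - m")
      case (Suc r) then have "k - Suc m = r" by arith
      then show ?thesis using Suc by simp
    qed simp
    have e2: "y * (of_nat (d - k - n) * y ^ (d - k - Suc n)) = of_nat (d - k - n) * y ^ (d - k - n)"
    proof (cases "d - k - n")
      case (Suc r) then have "d - k - Suc n = r" by arith
      then show ?thesis using Suc by simp
    qed simp
    have e3: "(of_nat (k - m) :: complex) + of_nat (d - k - n) = of_nat d - of_nat m - of_nat n"
    proof -
      have "(k - m) + (d - k - n) + m + n = d" using True that by arith
      then have "of_nat ((k - m) + (d - k - n) + m + n) = (of_nat d :: complex)" by simp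
      then show ?thesis by (simp only: of_nat_add) (simp add: algebra_simps)
    qed
    have "x * (a k * of_nat (ffa k (Suc m)) * of_nat (ffa (d-k) n) * x ^ (k - Suc m) * y ^ (d-k-n))
      + y * (a k * of_nat (ffa k m) * of_nat (ffa (d-k) (Suc n)) * x ^ (k - m) * y ^ (d-k - Suc n))
      = (a k * of_nat (ffa k m) * of_nat (ffa (d-k) n)) * (x * (of_nat (k - m) * x ^ (k - Suc m)) * y ^ (d-k-n)
         + x ^ (k - m) * (y * (of_nat (d - k - n) * y ^ (d - k - Suc n))))"
      by (simp only: ffa.simps of_nat_mult distrib_left ac_simps)
    also have "\<dots> = (a k * of_nat (ffa k m) * of_nat (ffa (d-k) n)) * ((of_nat (k - m) + of_nat (d - k - n)) * x ^ (k-m) * y ^ (d-k-n))"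
      unfolding e1 e2 by (simp add: algebra_simps)
    finally show ?thesis unfolding e3 by (simp add: algebra_simps)
  next
    case False
    then show ?thesis by (auto simp: ffa_zero)
  qed
  then show ?thesis unfolding q P_def by (simp add: sum_distrib_left sum.distrib[symmetric])
qed



definition line :: "nat \<Rightarrow> complex \<times> complex \<Rightarrow> complex \<Rightarrow> complex \<times> complex" where
  "line i p t = (if i = 0 then (t, snd p) else (fst p, t))"
definition coord :: "nat \<Rightarrow> complex \<times> complex \<Rightarrow> complex" where
  "coord i p = (if i = 0 then fst p else snd p)"

lemma line_coord[simp]: "line i p (coord i p) = p"
  by (simp add: line_def coord_def)

lemma pd_eq: "((\<lambda>t. F (line i p t)) has_field_derivative D) (at (coord i p)) \<Longrightarrow> pd i F p = D"
  unfolding pd_def line_def coord_def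
  by (cases "i = 0") (auto intro: DERIV_imp_deriv)

definition c0 :: "nat list \<Rightarrow> nat" where "c0 is = length (filter (\<lambda>i. i = 0) is)"
definition c1 :: "nat list \<Rightarrow> nat" where "c1 is = length (filter (\<lambda>i. i \<noteq> 0) is)"

definition Dv :: "nat \<Rightarrow> (nat \<Rightarrow> complex) \<Rightarrow> nat list \<Rightarrow> complex \<times> complex \<Rightarrow> complex" where
  "Dv d a is q = P d a (c0 is) (c1 is) q"

lemma Dv_line_deriv:
  "((\<lambda>t. Dv d a is (line i p t)) has_field_derivative Dv d a (i#is) (line i p t)) (at t within S)"
proof (cases "i = 0")
  case True
  then show ?thesis unfolding Dv_def line_def c0_def c1_def
    using P_deriv0[where y="snd p" and t=t and m="c0 is" and n="c1 is"]
    by (simp add: c0_def c1_def has_field_derivative_at_within)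
next
  case False
  then show ?thesis unfolding Dv_def line_def c0_def c1_def
    using P_deriv1[where x="fst p" and t=t and m="c0 is" and n="c1 is"]
    by (simp add: c0_def c1_def has_field_derivative_at_within)
qed

lemma Dv_line_deriv_eq[derivative_intros]:
  "D = Dv d a (i#is) (line i p t) \<Longrightarrow> ((\<lambda>t. Dv d a is (line i p t)) has_field_derivative D) (at t within S)"
  using Dv_line_deriv by simp

lemma pd_Pi: "pd i (Dv d a is) = Dv d a (i#is)"
  by (rule ext, rule pd_eq, rule Dv_line_deriv_eq) simp

lemma pd_cPi: "pd i (\<lambda>q. c * Dv d a is q) = (\<lambda>q. c * Dv d a (i#is) q)"
  by (rule ext, rule pd_eq) (auto intro!: derivative_eq_intros)

lemma f_Pi: "hom_poly d a = Dv d a []"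
  by (rule ext) (simp add: hom_poly_def Dv_def P_def c0_def c1_def)

definition adjH where
  "adjH d a l m q = (if l = 0 \<and> m = 0 then Dv d a [1,1] q else if l = 1 \<and> m = 1 then Dv d a [0,0] q
      else - Dv d a [l,m] q)"
definition dH where
  "dH d a q = Dv d a [0,0] q * Dv d a [1,1] q - Dv d a [0,1] q * Dv d a [1,0] q"
definition Gs where
  "Gs d a l j k q = (adjH d a l 0 q * Dv d a [j,k,0] q + adjH d a l 1 q * Dv d a [j,k,1] q) / (2 * dH d a q)"
definition dAdj where
  "dAdj d a i l m q = (if l = 0 \<and> m = 0 then Dv d a [i,1,1] q else if l = 1 \<and> m = 1 then Dv d a [i,0,0] q
      else - Dv d a [i,l,m] q)"
definition ddH where
  "ddH d a i q = Dv d a [i,0,0] q * Dv d a [1,1] q + Dv d a [0,0] q * Dv d a [i,1,1] q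
     - (Dv d a [i,0,1] q * Dv d a [1,0] q + Dv d a [0,1] q * Dv d a [i,1,0] q)"
definition DG where
  "DG d a i l j k q = ((dAdj d a i l 0 q * Dv d a [j,k,0] q + adjH d a l 0 q * Dv d a [i,j,k,0] q
      + dAdj d a i l 1 q * Dv d a [j,k,1] q + adjH d a l 1 q * Dv d a [i,j,k,1] q) * (2 * dH d a q)
    - (adjH d a l 0 q * Dv d a [j,k,0] q + adjH d a l 1 q * Dv d a [j,k,1] q) * (2 * ddH d a i q))
    / (2 * dH d a q)^2"

lemma adjH_simps:
  "adjH d a 0 0 q = Dv d a [1,1] q" "adjH d a 0 1 q = - Dv d a [0,1] q"
  "adjH d a 1 0 q = - Dv d a [1,0] q" "adjH d a 1 1 q = Dv d a [0,0] q"
  by (simp_all add: adjH_def)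

lemma pd_Gs:
  assumes "l < 2" "dH d a p \<noteq> 0"
  shows "pd i (Gs d a l j k) p = DG d a i l j k p"
proof (rule pd_eq)
  have l: "l = 0 \<or> l = 1" using assms(1) by auto
  have nz: "Dv d a [0,0] p * Dv d a [1,1] p - Dv d a [0,1] p * Dv d a [1,0] p \<noteq> 0"
    using assms(2) by (simp add: dH_def)
  then have nz2: "2 * (Dv d a [0,0] p * Dv d a [1,1] p - Dv d a [0,1] p * Dv d a [1,0] p) \<noteq> 0"
    by simp
  show "((\<lambda>t. Gs d a l j k (line i p t)) has_field_derivative DG d a i l j k p) (at (coord i p))"
    using l
  proof
    assume l0: "l = 0"
    show ?thesis unfolding l0 Gs_def dH_def adjH_simps
      apply -
      apply (rule Dv_line_deriv_eq refl | rule derivative_eq_intros | (simp only: line_coord, rule nz2))+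
      unfolding DG_def dAdj_def adjH_def ddH_def dH_def l0 using nz
      by (simp_all add: field_simps power2_eq_square)
  next
    assume l1: "l = 1"
    show ?thesis unfolding l1 Gs_def dH_def adjH_simps
      apply -
      apply (rule Dv_line_deriv_eq refl | rule derivative_eq_intros | (simp only: line_coord, rule nz2))+
      unfolding DG_def dAdj_def adjH_def ddH_def dH_def l1 using nz
      by (simp_all add: field_simps power2_eq_square)
  qed
qed



lemma pdpd_f: "pd i (pd j (hom_poly d a)) = Dv d a [i,j]"
  by (simp add: f_Pi pd_Pi)

lemma christoffel_Gs:
  fixes c :: complex
  assumes c: "c \<noteq> 0" and "k < 2" "i < 2" "j < 2"
  shows "christoffel (\<lambda>i j q. c * Dv d a [i,j] q) k i j q = Gs d a k i j q"
proof -
  have pdg: "pd i (\<lambda>q. c * Dv d a [j,l] q) q = c * Dv d a [i,j,l] q" for i j l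
    by (simp add: pd_cPi)
  have md: "mdet (\<lambda>i j q. c * Dv d a [i,j] q) q = c^2 * dH d a q"
    by (simp add: mdet_def dH_def power2_eq_square algebra_simps)
  have ks: "k = 0 \<or> k = 1" "i = 0 \<or> i = 1" "j = 0 \<or> j = 1" using assms by auto
  show ?thesis
  proof (cases "dH d a q = 0")
    case True
    then show ?thesis unfolding christoffel_def ginv_def md Gs_def
      by simp
  next
    case False
    then show ?thesis using ks unfolding christoffel_def ginv_def md Gs_def pdg adjH_def
      using c by (auto simp: numeral_2_eq_2 Dv_def c0_def c1_def field_simps power2_eq_square)
  qed
qed

lemma Dv_tab:
  "Dv d a [0,0] q = P d a 2 0 q"
  "Dv d a [0,1] q = P d a 1 1 q"
  "Dv d a [1,0] q = P d a 1 1 q"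
  "Dv d a [1,1] q = P d a 0 2 q"
  "Dv d a [0,0,0] q = P d a 3 0 q"
  "Dv d a [0,0,1] q = P d a 2 1 q"
  "Dv d a [0,1,0] q = P d a 2 1 q"
  "Dv d a [0,1,1] q = P d a 1 2 q"
  "Dv d a [1,0,0] q = P d a 2 1 q"
  "Dv d a [1,0,1] q = P d a 1 2 q"
  "Dv d a [1,1,0] q = P d a 1 2 q"
  "Dv d a [1,1,1] q = P d a 0 3 q"
  "Dv d a [0,0,0,0] q = P d a 4 0 q"
  "Dv d a [0,0,0,1] q = P d a 3 1 q"
  "Dv d a [0,0,1,0] q = P d a 3 1 q"
  "Dv d a [0,0,1,1] q = P d a 2 2 q"
  "Dv d a [0,1,0,0] q = P d a 3 1 q"
  "Dv d a [0,1,0,1] q = P d a 2 2 q"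
  "Dv d a [0,1,1,0] q = P d a 2 2 q"
  "Dv d a [0,1,1,1] q = P d a 1 3 q"
  "Dv d a [1,0,0,0] q = P d a 3 1 q"
  "Dv d a [1,0,0,1] q = P d a 2 2 q"
  "Dv d a [1,0,1,0] q = P d a 2 2 q"
  "Dv d a [1,0,1,1] q = P d a 1 3 q"
  "Dv d a [1,1,0,0] q = P d a 2 2 q"
  "Dv d a [1,1,0,1] q = P d a 1 3 q"
  "Dv d a [1,1,1,0] q = P d a 1 3 q"
  "Dv d a [1,1,1,1] q = P d a 0 4 q"
  by (simp_all add: Dv_def c0_def c1_def numeral_eq_Suc)

lemma sum2: "(\<Sum>m<(2::nat). F m) = F 0 + F 1"
  by (simp add: numeral_2_eq_2)



lemma all_less_2: "(\<forall>l<(2::nat). Q l) \<longleftrightarrow> Q 0 \<and> Q 1"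
  by (auto simp: less_2_cases_iff)

lemma R_alg:
  fixes h00 h01 h11 A0 A1 A2 A3 :: complex
  assumes D: "D \<noteq> 0" "h00*h11 - h01*h01 = D"
  and NN: "N = 0"
  "h11*(A0*A2 - A1*A1) + h00*(A1*A3-A2*A2) - h01*(A0*A3 - A1*A2) = N"
  and PP: "P d a 2 0 p = h00" "P d a 1 1 p = h01" "P d a 0 2 p = h11"
  "P d a 3 0 p = A0" "P d a 2 1 p = A1" "P d a 1 2 p = A2" "P d a 0 3 p = A3"
  "P d a 4 0 p = B0" "P d a 3 1 p = B1" "P d a 2 2 p = B2" "P d a 1 3 p = B3" "P d a 0 4 p = B4"
  shows "\<forall>l<2. \<forall>i<2. \<forall>j<2. \<forall>k<2. DG d a i l j k p - DG d a j l i k p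
     + (\<Sum>m<2. Gs d a l i m p * Gs d a m j k p - Gs d a l j m p * Gs d a m i k p) = 0"
  unfolding all_less_2
  apply (intro conjI)
  apply (simp only: DG_def Gs_def dAdj_def adjH_def ddH_def dH_def sum2 Dv_tab;
     simp only: if_True if_False simp_thms one_neq_zero zero_neq_one PP;
     simp only: D(2);
     (use D(1) in \<open>simp add: field_simps power2_eq_square\<close>)?;
     (use D(2) NN in algebra))+
  done



lemma N_zero:
  assumes "d \<ge> 2"
  shows "P d a 0 2 p * (P d a 3 0 p * P d a 1 2 p - P d a 2 1 p * P d a 2 1 p)
       + P d a 2 0 p * (P d a 2 1 p * P d a 0 3 p - P d a 1 2 p * P d a 1 2 p)
       - P d a 1 1 p * (P d a 3 0 p * P d a 0 3 p - P d a 2 1 p * P d a 1 2 p) = 0"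
proof (cases "d = 2")
  case True
  then show ?thesis by (simp add: P_vanish)
next
  case False
  define e :: complex where "e = of_nat d - 2"
  have e: "e \<noteq> 0" using False assms unfolding e_def
    by (metis eq_iff_diff_eq_0 of_nat_eq_iff of_nat_numeral)
  have E1: "fst p * P d a 3 0 p + snd p * P d a 2 1 p = e * P d a 2 0 p"
    using P_euler[of p d a 2 0] by (simp add: e_def numeral_3_eq_3 numeral_2_eq_2)
  have E2: "fst p * P d a 2 1 p + snd p * P d a 1 2 p = e * P d a 1 1 p"
    using P_euler[of p d a 1 1] by (simp add: e_def numeral_3_eq_3 numeral_2_eq_2 algebra_simps)
  have E3: "fst p * P d a 1 2 p + snd p * P d a 0 3 p = e * P d a 0 2 p"
    using P_euler[of p d a 0 2] by (simp add: e_def numeral_3_eq_3 numeral_2_eq_2)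
  have "e * (P d a 0 2 p * (P d a 3 0 p * P d a 1 2 p - P d a 2 1 p * P d a 2 1 p)
       + P d a 2 0 p * (P d a 2 1 p * P d a 0 3 p - P d a 1 2 p * P d a 1 2 p)
       - P d a 1 1 p * (P d a 3 0 p * P d a 0 3 p - P d a 2 1 p * P d a 1 2 p)) = 0"
    using E1 E2 E3 by algebra
  then show ?thesis using e by simp
qed

theorem lemma6p1:
  fixes d :: nat and a :: "nat \<Rightarrow> complex"
  assumes "d \<ge> 2"
  defines "f \<equiv> hom_poly d a"
  defines "g \<equiv> (\<lambda>i j p. - (1 / (of_nat d * (of_nat d - 1))) * pd i (pd j f) p)"
  shows "flat_on g {p. mdet (\<lambda>i j. pd i (pd j f)) p \<noteq> 0}"
proof -
  define c :: complex where "c = - (1 / (of_nat d * (of_nat d - 1)))"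
  have d1: "(of_nat d :: complex) - 1 \<noteq> 0" using assms
    by (metis eq_iff_diff_eq_0 of_nat_1 of_nat_eq_iff numeral_le_one_iff semiring_norm(69))
  have c: "c \<noteq> 0" using assms d1 unfolding c_def by auto
  have g: "g = (\<lambda>i j q. c * Dv d a [i,j] q)"
    unfolding g_def c_def f_def pdpd_f ..
  have chr: "christoffel g l j k = Gs d a l j k" if "l < 2" "j < 2" "k < 2" for l j k
    unfolding g using christoffel_Gs[OF c that] by auto
  show ?thesis
    unfolding flat_on_def
  proof (intro ballI allI impI)
    fix p and l i j k :: nat assume p: "p \<in> {p. mdet (\<lambda>i j. pd i (pd j f)) p \<noteq> 0}"
      and lijk: "l < 2" "i < 2" "j < 2" "k < 2"
    have dH: "dH d a p \<noteq> 0" using p unfolding f_def pdpd_f mdet_def dH_def by simp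
    have "riemann g l i j k p = DG d a i l j k p - DG d a j l i k p
     + (\<Sum>m<2. Gs d a l i m p * Gs d a m j k p - Gs d a l j m p * Gs d a m i k p)"
      unfolding riemann_def sum2 using lijk
      by (simp add: chr pd_Gs dH)
    also have "\<dots> = 0"
    proof -
      have dH': "P d a 2 0 p * P d a 0 2 p - P d a 1 1 p * P d a 1 1 p \<noteq> 0"
        using dH unfolding dH_def Dv_tab by simp
      show ?thesis
        using R_alg[OF dH' refl N_zero[OF assms(1), of a p] refl refl refl refl refl refl refl refl
          refl refl refl refl refl] lijk by blast
    qed
    finally show "riemann g l i j k p = 0" .
  qed
qed


end
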